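(* Let $Z=(X,Y)\in G_m(1)$. Then for every transition function $\varphi$ there exists $\epsilon_0>0$ such that for all $0<\epsilon\le\epsilon_0$ all singular points of $\mathcal P(Z)_\epsilon$ in $S^2$ are hyperbolic.
   Context: Fix $m\ge1$. $\chi_m$ is the space of real polynomial vector fields $X=P\partial_x+Q\partial_y$ on $\mathbb R^2$ with $\deg P,\deg Q\le m$, identified with coefficient vectors in $\mathbb R^{(m+1)(m+2)}$; $\deg X=\max\{\deg P,\deg Q\}$. Let $f(x,y)=y$, $D=\{y=0\}$, $N=\{y>0\}$, $S=\{y<0\}$. $\Omega_m$ is the set of pairs $Z=(X,Y)$, $X,Y\in\chi_m$ of degree exactly $m$, regarded as the discontinuous vector field equal to $X$ on $\{y\ge0\}$ and $Y$ on $\{y\le0\}$. For $X\in\chi_m$, $\mathcal P(X)$ is the unique analytic vector field tangent to $S^2=\{x^2+y^2+z^2=1\}$ whose restriction to $S^2_+=\{z>0\}$ is $z^{m-1}\wp^*(X)$, $\wp(u,v)=(u,v,1)/\sqrt{u^2+v^2+1}$; $S^1=\{z=0\}$ is invariant. $\mathcal P(Z)=(\mathcal P(X),\mathcal P(Y))$ is the discontinuous field on the sphere equal to $\mathcal P(X)$ where $y\ge0$, $\mathcal P(Y)$ where $y\le0$, with $f(x,y,z)=y$, $D=\{y=0\}$, $N=\{y>0\}$, $S=\{y<0\}$. A transition function is a $C^\infty$ $\varphi:\mathbb R\to\mathbb R$ with $\varphi=0$ on $(-\infty,-1]$, $\varphi=1$ on $[1,\infty)$, $\varphi'>0$ on $(-1,1)$.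 $\mathcal P(Z)_\epsilon(q)=(1-\varphi_\epsilon(f(q)))\mathcal P(Y)(q)+\varphi_\epsilon(f(q))\mathcal P(X)(q)$, $\varphi_\epsilon(t)=\varphi(t/\epsilon)$. For a discontinuous field $(U,V)$ write $Uf=\langle\nabla f,U\rangle$, $U^2f=U(Uf)$. Escaping arc: $Uf>0,Vf<0$; sliding arc: $Uf<0,Vf>0$; on these the Filippov vector field $F(p)$ is the vector in the cone spanned by $U(p),V(p)$ tangent to $D$. A fold point is $p\in D$ with $Vf(p)\neq0,Uf(p)=0,U^2f(p)\neq0$ or $Uf(p)\neq0,Vf(p)=0,V^2f(p)\neq0$. A hyperbolic singular point of $F$ is $p\in D$ with $Uf(p)Vf(p)<0$, $\det[U,V](p)=0$ and nonzero derivative at $p$ of $\det[U,V]|_D$. A $D$-singularity is a point of $D$ that is not $D$-regular ($p$ is $D$-regular if $Uf(p)Vf(p)>0$, or $Uf(p)Vf(p)<0$ and $\det[U,V](p)\neq0$); it is elementary if it is a fold point or a hyperbolic singular point of $F$. $\mathcal S_m$ is the set of $X\in\chi_m$ such that $\mathcal P(X)$ has all singular points hyperbolic, all periodic orbits hyperbolic, and no saddle connections in $S^2$ except those contained in $S^1$; "$X|_N\in\mathcal S_m$" (resp. "$Y|_S\in\mathcal S_m$") means these three conditions hold for $\mathcal P(X)$ restricted to $N$ (resp. $\mathcal P(Y)$ restricted to $S$). $G_m(1)$ is the set of $Z=(X,Y)\in\Omega_m$ with $X|_N,Y|_S\in\mathcal S_m$ and every $D$-singularity of $\mathcal P(Z)=(U,V)$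 elementary. *)

theory Defs
  imports "HOL-Analysis.Analysis"
begin

type_synonym poly2 = "nat \<Rightarrow> nat \<Rightarrow> real"
  (* a i j is the coefficient of x^i y^j *)

type_synonym pvf = "poly2 \<times> poly2"
  (* X = P d/dx + Q d/dy, X = (coefficients of P, coefficients of Q) *)

definition in_chi :: "nat \<Rightarrow> pvf \<Rightarrow> bool" where
  "in_chi m X \<longleftrightarrow> (\<forall>i j. m < i + j \<longrightarrow> fst X i j = 0 \<and> snd X i j = 0)"

definition deg_exactly :: "nat \<Rightarrow> pvf \<Rightarrow> bool" where
  "deg_exactly m X \<longleftrightarrow> in_chi m X \<and>
     (\<exists>i j. i + j = m \<and> (fst X i j \<noteq> 0 \<or> snd X i j \<noteq> 0))"

text \<open>Homogenisation of degree m: z^m P(x/z, y/z).\<close>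
definition hom :: "nat \<Rightarrow> poly2 \<Rightarrow> real^3 \<Rightarrow> real" where
  "hom m a q = (\<Sum>i\<le>m. \<Sum>j\<le>m - i. a i j * (q$1)^i * (q$2)^j * (q$3)^(m - i - j))"

text \<open>Poincare compactification: the polynomial (hence analytic) vector field on R^3,
  tangent to S^2, whose restriction to z>0 equals z^(m-1) times the pullback of X.\<close>
definition poinc :: "nat \<Rightarrow> pvf \<Rightarrow> real^3 \<Rightarrow> real^3" where
  "poinc m X q = vector [hom m (fst X) q, hom m (snd X) q, 0]
       - (q$1 * hom m (fst X) q + q$2 * hom m (snd X) q) *\<^sub>R q"

definition S2 :: "(real^3) set" where "S2 = {q. norm q = 1}"
definition Nset :: "(real^3) set" where "Nset = {q. q$2 > 0}"
definition Sset :: "(real^3) set" where "Sset = {q. q$2 < 0}"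
definition Dset :: "(real^3) set" where "Dset = {q. q$2 = 0}"

definition tang :: "real^3 \<Rightarrow> (real^3) set" where
  "tang p = {w. w \<bullet> p = 0}"

text \<open>Singular point p in S^2 is hyperbolic: the linearisation on the tangent plane has
  no eigenvalue i*mu (mu real, incl. 0); complex eigenvector written as w1 + i w2.\<close>
definition hyp_sing :: "(real^3 \<Rightarrow> real^3) \<Rightarrow> real^3 \<Rightarrow> bool" where
  "hyp_sing V p \<longleftrightarrow> V p = 0 \<and> V differentiable (at p) \<and>
     \<not> (\<exists>\<mu> w1 w2. w1 \<in> tang p \<and> w2 \<in> tang p \<and> (w1 \<noteq> 0 \<or> w2 \<noteq> 0) \<and>
          frechet_derivative V (at p) w1 = (- \<mu>) *\<^sub>R w2 \<and>
          frechet_derivative V (at p) w2 = \<mu> *\<^sub>R w1)"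

definition saddle :: "(real^3 \<Rightarrow> real^3) \<Rightarrow> real^3 \<Rightarrow> bool" where
  "saddle V p \<longleftrightarrow> V p = 0 \<and> V differentiable (at p) \<and>
     (\<exists>w1 w2 l1 l2. w1 \<in> tang p \<and> w2 \<in> tang p \<and> w1 \<noteq> 0 \<and> w2 \<noteq> 0 \<and>
        l1 < 0 \<and> 0 < l2 \<and>
        frechet_derivative V (at p) w1 = l1 *\<^sub>R w1 \<and>
        frechet_derivative V (at p) w2 = l2 *\<^sub>R w2)"

definition is_sol :: "(real^3 \<Rightarrow> real^3) \<Rightarrow> (real \<Rightarrow> real^3) \<Rightarrow> bool" where
  "is_sol V \<gamma> \<longleftrightarrow> (\<forall>t. (\<gamma> has_vector_derivative V (\<gamma> t)) (at t))"

text \<open>Periodic orbit through gamma(0) with period T is hyperbolic: the monodromy of the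
  variational equation, acting on T_{gamma 0} S^2 modulo the flow direction, has its
  nontrivial multiplier lambda with |lambda| \<noteq> 1 (lambda real), i.e. lambda \<noteq> 1, -1.\<close>
definition hyp_periodic :: "(real^3 \<Rightarrow> real^3) \<Rightarrow> (real \<Rightarrow> real^3) \<Rightarrow> real \<Rightarrow> bool" where
  "hyp_periodic V \<gamma> T \<longleftrightarrow>
     (\<forall>w W. w \<in> tang (\<gamma> 0) \<and> W 0 = w \<and>
        (\<forall>t. (W has_vector_derivative frechet_derivative V (at (\<gamma> t)) (W t)) (at t))
        \<longrightarrow> (\<exists>c. w = c *\<^sub>R V (\<gamma> 0)) \<or>
            (\<forall>c. W T \<noteq> w + c *\<^sub>R V (\<gamma> 0) \<and> W T \<noteq> - w + c *\<^sub>R V (\<gamma> 0)))"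

definition Sm_cond :: "(real^3 \<Rightarrow> real^3) \<Rightarrow> (real^3) set \<Rightarrow> bool" where
  "Sm_cond V A \<longleftrightarrow>
     (\<forall>p \<in> S2 \<inter> A. V p = 0 \<longrightarrow> hyp_sing V p) \<and>
     (\<forall>\<gamma> T. is_sol V \<gamma> \<and> (\<forall>t. \<gamma> t \<in> S2 \<inter> A) \<and> T > 0 \<and> (\<forall>t. \<gamma> (t + T) = \<gamma> t)
          \<and> V (\<gamma> 0) \<noteq> 0 \<longrightarrow> hyp_periodic V \<gamma> T) \<and>
     (\<forall>\<gamma> s1 s2. is_sol V \<gamma> \<and> (\<forall>t. \<gamma> t \<in> S2 \<inter> A) \<and> V (\<gamma> 0) \<noteq> 0 \<and>
          (\<gamma> \<longlongrightarrow> s1) at_bot \<and> (\<gamma> \<longlongrightarrow> s2) at_top \<and>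
          s1 \<in> S2 \<inter> A \<and> s2 \<in> S2 \<inter> A \<and> saddle V s1 \<and> saddle V s2
          \<longrightarrow> (\<forall>t. \<gamma> t $ 3 = 0))"

definition Uf :: "(real^3 \<Rightarrow> real^3) \<Rightarrow> real^3 \<Rightarrow> real" where
  "Uf U q = U q $ 2"   (* <grad f, U>, f = y *)

definition U2f :: "(real^3 \<Rightarrow> real^3) \<Rightarrow> real^3 \<Rightarrow> real" where
  "U2f U q = frechet_derivative (Uf U) (at q) (U q)"

text \<open>det[U,V] on the tangent plane of S^2 at q (oriented by the outward normal q).\<close>
definition detUV :: "(real^3 \<Rightarrow> real^3) \<Rightarrow> (real^3 \<Rightarrow> real^3) \<Rightarrow> real^3 \<Rightarrow> real" where
  "detUV U V q = (let u = U q; v = V q in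
      q$1 * (u$2 * v$3 - u$3 * v$2) - q$2 * (u$1 * v$3 - u$3 * v$1)
      + q$3 * (u$1 * v$2 - u$2 * v$1))"

text \<open>Tangent direction of the circle D \<inter> S^2 at p.\<close>
definition dirD :: "real^3 \<Rightarrow> real^3" where
  "dirD p = vector [p$3, 0, - p$1]"

definition fold_pt :: "(real^3 \<Rightarrow> real^3) \<Rightarrow> (real^3 \<Rightarrow> real^3) \<Rightarrow> real^3 \<Rightarrow> bool" where
  "fold_pt U V p \<longleftrightarrow> p \<in> S2 \<inter> Dset \<and>
     ((Uf V p \<noteq> 0 \<and> Uf U p = 0 \<and> U2f U p \<noteq> 0) \<or>
      (Uf U p \<noteq> 0 \<and> Uf V p = 0 \<and> U2f V p \<noteq> 0))"

definition hypF_pt :: "(real^3 \<Rightarrow> real^3) \<Rightarrow> (real^3 \<Rightarrow> real^3) \<Rightarrow> real^3 \<Rightarrow> bool" where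
  "hypF_pt U V p \<longleftrightarrow> p \<in> S2 \<inter> Dset \<and> Uf U p * Uf V p < 0 \<and> detUV U V p = 0 \<and>
     frechet_derivative (detUV U V) (at p) (dirD p) \<noteq> 0"

definition D_regular :: "(real^3 \<Rightarrow> real^3) \<Rightarrow> (real^3 \<Rightarrow> real^3) \<Rightarrow> real^3 \<Rightarrow> bool" where
  "D_regular U V p \<longleftrightarrow> Uf U p * Uf V p > 0 \<or> (Uf U p * Uf V p < 0 \<and> detUV U V p \<noteq> 0)"

definition D_sing :: "(real^3 \<Rightarrow> real^3) \<Rightarrow> (real^3 \<Rightarrow> real^3) \<Rightarrow> real^3 \<Rightarrow> bool" where
  "D_sing U V p \<longleftrightarrow> p \<in> S2 \<inter> Dset \<and> \<not> D_regular U V p"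

definition Gm1 :: "nat \<Rightarrow> pvf \<Rightarrow> pvf \<Rightarrow> bool" where
  "Gm1 m X Y \<longleftrightarrow> deg_exactly m X \<and> deg_exactly m Y \<and>
     Sm_cond (poinc m X) Nset \<and> Sm_cond (poinc m Y) Sset \<and>
     (\<forall>p. D_sing (poinc m X) (poinc m Y) p \<longrightarrow>
            fold_pt (poinc m X) (poinc m Y) p \<or> hypF_pt (poinc m X) (poinc m Y) p)"

definition smooth_real :: "(real \<Rightarrow> real) \<Rightarrow> bool" where
  "smooth_real \<phi> \<longleftrightarrow> (\<exists>d. d 0 = \<phi> \<and> (\<forall>n x. (d n has_real_derivative d (Suc n) x) (at x)))"

definition transition_fun :: "(real \<Rightarrow> real) \<Rightarrow> bool" where
  "transition_fun \<phi> \<longleftrightarrow> smooth_real \<phi> \<and> (\<forall>t. t \<le> -1 \<longrightarrow> \<phi> t = 0) \<and>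
     (\<forall>t. 1 \<le> t \<longrightarrow> \<phi> t = 1) \<and> (\<forall>t. -1 < t \<and> t < 1 \<longrightarrow> deriv \<phi> t > 0)"

definition reg_field :: "nat \<Rightarrow> (real \<Rightarrow> real) \<Rightarrow> real \<Rightarrow> pvf \<Rightarrow> pvf \<Rightarrow> real^3 \<Rightarrow> real^3" where
  "reg_field m \<phi> \<epsilon> X Y q =
     (1 - \<phi> (q$2 / \<epsilon>)) *\<^sub>R poinc m Y q + \<phi> (q$2 / \<epsilon>) *\<^sub>R poinc m X q"

end

theory Submission
  imports Defs
begin


lemma hd_nth: "((\<lambda>q::real^3. q$i) has_derivative (\<lambda>h. h$i)) F"
  using bounded_linear.has_derivative[OF bounded_linear_vec_nth, of "\<lambda>x. x" "\<lambda>x. x" F i]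
  by (simp add: has_derivative_ident)

definition dmono :: "nat \<Rightarrow> nat \<Rightarrow> nat \<Rightarrow> real^3 \<Rightarrow> real^3 \<Rightarrow> real" where
 "dmono i j k q h = of_nat i * h$1 * (q$1)^(i-1) * (q$2)^j * (q$3)^k
    + (q$1)^i * (of_nat j * h$2 * (q$2)^(j-1)) * (q$3)^k
    + (q$1)^i * (q$2)^j * (of_nat k * h$3 * (q$3)^(k-1))"

lemma mono_deriv: "((\<lambda>q::real^3. (q$1)^i * (q$2)^j * (q$3)^k) has_derivative dmono i j k q) (at q)"
  unfolding dmono_def
  apply (rule derivative_eq_intros hd_nth refl)+
  apply (simp add: algebra_simps)
  done

definition dhom :: "nat \<Rightarrow> poly2 \<Rightarrow> real^3 \<Rightarrow> real^3 \<Rightarrow> real" where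
 "dhom m a q h = (\<Sum>i\<le>m. \<Sum>j\<le>m - i. a i j * dmono i j (m-i-j) q h)"

lemma hom_deriv: "(hom m a has_derivative dhom m a q) (at q)"
proof -
  have e: "hom m a = (\<lambda>q. \<Sum>i\<le>m. \<Sum>j\<le>m - i. a i j * ((q$1)^i * (q$2)^j * (q$3)^(m-i-j)))"
    by (rule ext) (simp add: hom_def mult.assoc)
  show ?thesis unfolding e dhom_def
    by (intro has_derivative_sum has_derivative_mult_right mono_deriv)
qed

lemma dhom_tendsto: "(Q \<longlongrightarrow> p) F \<Longrightarrow> (H \<longlongrightarrow> h) F \<Longrightarrow> ((\<lambda>n. dhom m a (Q n) (H n)) \<longlongrightarrow> dhom m a p h) F"
  unfolding dhom_def dmono_def
  by (intro tendsto_intros)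

lemma poinc_alt: "poinc m X q = hom m (fst X) q *\<^sub>R vector [1,0,0] + hom m (snd X) q *\<^sub>R vector [0,1,0]
   - (q$1 * hom m (fst X) q + q$2 * hom m (snd X) q) *\<^sub>R q"
  unfolding poinc_def by (simp add: vec_eq_iff forall_3)

definition dpoinc :: "nat \<Rightarrow> pvf \<Rightarrow> real^3 \<Rightarrow> real^3 \<Rightarrow> real^3" where
 "dpoinc m X q h = dhom m (fst X) q h *\<^sub>R vector [1,0,0] + dhom m (snd X) q h *\<^sub>R vector [0,1,0]
   - (h$1 * hom m (fst X) q + q$1 * dhom m (fst X) q h + h$2 * hom m (snd X) q + q$2 * dhom m (snd X) q h) *\<^sub>R q
   - (q$1 * hom m (fst X) q + q$2 * hom m (snd X) q) *\<^sub>R h"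

lemma poinc_deriv: "(poinc m X has_derivative dpoinc m X q) (at q)"
proof -
  have e: "poinc m X = (\<lambda>q. hom m (fst X) q *\<^sub>R vector [1,0,0] + hom m (snd X) q *\<^sub>R vector [0,1,0]
   - (q$1 * hom m (fst X) q + q$2 * hom m (snd X) q) *\<^sub>R q)"
    by (rule ext) (rule poinc_alt)
  show ?thesis unfolding e dpoinc_def
    apply (rule derivative_eq_intros hd_nth hom_deriv refl)+
    apply (simp add: algebra_simps)
    done
qed

lemma hom_tendsto: "(Q \<longlongrightarrow> p) F \<Longrightarrow> ((\<lambda>n. hom m a (Q n)) \<longlongrightarrow> hom m a p) F"
  unfolding hom_def by (intro tendsto_intros)

lemma dpoinc_tendsto: "(Q \<longlongrightarrow> p) F \<Longrightarrow> (H \<longlongrightarrow> h) F \<Longrightarrow> ((\<lambda>n. dpoinc m X (Q n) (H n)) \<longlongrightarrow> dpoinc m X p h) F"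
  unfolding dpoinc_def
  by (intro tendsto_intros dhom_tendsto hom_tendsto)

lemma poinc_tendsto: "(Q \<longlongrightarrow> p) F \<Longrightarrow> ((\<lambda>n. poinc m X (Q n)) \<longlongrightarrow> poinc m X p) F"
  unfolding poinc_alt
  by (intro tendsto_intros hom_tendsto)



lemma one_less_two: "(1::real) < 2" by simp
lemma neg_2_less_neg_1: "(-1::real) > -2" by simp

lemma phi_facts:
  assumes "transition_fun \<phi>"
  obtains \<phi>' where "\<And>x. (\<phi> has_real_derivative \<phi>' x) (at x)" "\<And>x. isCont \<phi>' x"
    "\<And>t. 1 \<le> \<bar>t\<bar> \<Longrightarrow> \<phi>' t = 0"
    "\<And>t. -1 < t \<Longrightarrow> t < 1 \<Longrightarrow> \<phi>' t > 0 \<and> 0 < \<phi> t \<and> \<phi> t < 1"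
    "\<And>t. t \<le> -1 \<Longrightarrow> \<phi> t = 0" "\<And>t. 1 \<le> t \<Longrightarrow> \<phi> t = 1"
proof -
  from assms obtain d where d0: "d 0 = \<phi>" and dd: "\<And>n x. (d n has_real_derivative d (Suc n) x) (at x)"
    unfolding transition_fun_def smooth_real_def by blast
  have D: "\<And>x. (\<phi> has_real_derivative d 1 x) (at x)" using dd[of 0] d0 by simp
  have C: "\<And>x. isCont (d 1) x" using dd[of 1] DERIV_isCont by (metis One_nat_def)
  have lo: "\<And>t. t \<le> -1 \<Longrightarrow> \<phi> t = 0" and hi: "\<And>t. 1 \<le> t \<Longrightarrow> \<phi> t = 1"
    using assms unfolding transition_fun_def by auto
  have pos: "\<And>t. -1 < t \<Longrightarrow> t < 1 \<Longrightarrow> d 1 t > 0"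
  proof -
    fix t :: real assume "-1 < t" "t < 1"
    then have "deriv \<phi> t > 0" using assms unfolding transition_fun_def by auto
    moreover have "deriv \<phi> t = d 1 t" using D DERIV_imp_deriv by blast
    ultimately show "d 1 t > 0" by simp
  qed
  have z_out: "\<And>t. 1 < \<bar>t\<bar> \<Longrightarrow> d 1 t = 0"
  proof -
    fix t :: real assume a: "1 < \<bar>t\<bar>"
    show "d 1 t = 0"
    proof (rule DERIV_local_const[OF D[of t], of "\<bar>t\<bar> - 1"])
      show "0 < \<bar>t\<bar> - 1" using a by simp
      show "\<forall>y. \<bar>t - y\<bar> < \<bar>t\<bar> - 1 \<longrightarrow> \<phi> t = \<phi> y"
      proof (cases "t > 0")
        case True then show ?thesis using a hi by (auto simp: abs_if)
      next
        case False then show ?thesis using a lo by (auto simp: abs_if)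
      qed
    qed
  qed
  have z1: "d 1 1 = 0"
  proof -
    have "(d 1 \<longlongrightarrow> d 1 1) (at_right 1)"
      using C[of 1] by (simp add: isCont_def filterlim_at_split)
    moreover have "eventually (\<lambda>x. d 1 x = 0) (at_right (1::real))"
      proof (rule eventually_mono[OF eventually_at_right_real[OF one_less_two]])
        fix x :: real assume "x \<in> {1<..<2}" then have "1 < \<bar>x\<bar>" by auto
        then show "d 1 x = 0" by (rule z_out)
      qed
    ultimately have "((\<lambda>x. 0) \<longlongrightarrow> d 1 1) (at_right (1::real))"
      by (rule Lim_transform_eventually)
    then show ?thesis using tendsto_const_iff[OF trivial_limit_at_right_real] by (metis One_nat_def)
  qed
  have zm1: "d 1 (-1) = 0"
  proof -
    have "(d 1 \<longlongrightarrow> d 1 (-1)) (at_left (-1))"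
      using C[of "-1"] by (simp add: isCont_def filterlim_at_split)
    moreover have "eventually (\<lambda>x. d 1 x = 0) (at_left (-1::real))"
      proof (rule eventually_mono[OF eventually_at_left_real[OF neg_2_less_neg_1]])
        fix x :: real assume "x \<in> {-2<..<-1}" then have "1 < \<bar>x\<bar>" by auto
        then show "d 1 x = 0" by (rule z_out)
      qed
    ultimately have "((\<lambda>x. 0) \<longlongrightarrow> d 1 (-1)) (at_left (-1::real))"
      by (rule Lim_transform_eventually)
    then show ?thesis using tendsto_const_iff[OF trivial_limit_at_left_real] by (metis One_nat_def)
  qed
  have zero: "\<And>t. 1 \<le> \<bar>t\<bar> \<Longrightarrow> d 1 t = 0"
  proof -
    fix t :: real assume "1 \<le> \<bar>t\<bar>"
    then have "t = 1 \<or> t = -1 \<or> 1 < \<bar>t\<bar>" by (auto simp: abs_if)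
    then show "d 1 t = 0" using z_out z1 zm1 by auto
  qed
  have contphi: "continuous_on A \<phi>" for A
    using D DERIV_isCont continuous_at_imp_continuous_on by blast
  have inside: "\<And>t. -1 < t \<Longrightarrow> t < 1 \<Longrightarrow> 0 < \<phi> t \<and> \<phi> t < 1"
  proof -
    fix t :: real assume a: "-1 < t" "t < 1"
    have "\<phi> (-1) < \<phi> t"
      apply (rule DERIV_pos_imp_increasing_open[OF a(1)])
      subgoal for x using D[of x] pos[of x] a by auto
      by (rule contphi)
    moreover have "\<phi> t < \<phi> 1"
      apply (rule DERIV_pos_imp_increasing_open[OF a(2)])
      subgoal for x using D[of x] pos[of x] a by auto
      by (rule contphi)
    ultimately show "0 < \<phi> t \<and> \<phi> t < 1" using lo[of "-1"] hi[of 1] by simp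
  qed
  show ?thesis
    apply (rule that[of "d 1"])
    apply (rule D)
    apply (rule C)
    apply (erule zero)
    using pos inside apply blast
    apply (erule lo)
    apply (erule hi)
    done
qed



lemma inner3: "(x::real^3) \<bullet> y = x$1*y$1 + x$2*y$2 + x$3*y$3"
  by (simp add: inner_vec_def sum_3)
lemma norm3: "norm (x::real^3) = 1 \<longleftrightarrow> x$1^2 + x$2^2 + x$3^2 = 1"
  by (simp add: norm_eq_sqrt_inner inner3 power2_eq_square)
lemma vec3_eq: "(x::real^3) = y \<longleftrightarrow> x$1 = y$1 \<and> x$2 = y$2 \<and> x$3 = y$3"
  by (simp add: vec_eq_iff forall_3)

lemma two_by_two:
  fixes a b c d x1 y1 x2 y2 \<nu> :: real
  assumes e1: "a*x1 + b*y1 = -\<nu>*x2" and e2: "c*x1 + d*y1 = -\<nu>*y2"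
    and e3: "a*x2 + b*y2 = \<nu>*x1" and e4: "c*x2 + d*y2 = \<nu>*y1"
    and nz: "x1 \<noteq> 0 \<or> y1 \<noteq> 0 \<or> x2 \<noteq> 0 \<or> y2 \<noteq> 0"
  shows "a*d - b*c = 0 \<or> a + d = 0"
proof -
  define t where "t = a + d"
  define \<delta> where "\<delta> = \<nu>^2 - (a*d - b*c)"
  have f1: "\<nu>*t*x2 = \<delta>*x1" unfolding t_def \<delta>_def using e1 e2 e3 e4 by algebra
  have f2: "\<nu>*t*x1 = -\<delta>*x2" unfolding t_def \<delta>_def using e1 e2 e3 e4 by algebra
  have f3: "\<nu>*t*y2 = \<delta>*y1" unfolding t_def \<delta>_def using e1 e2 e3 e4 by algebra
  have f4: "\<nu>*t*y1 = -\<delta>*y2" unfolding t_def \<delta>_def using e1 e2 e3 e4 by algebra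
  have g1: "((\<nu>*t)^2 + \<delta>^2) * x1 = 0" using f1 f2 by algebra
  have g2: "((\<nu>*t)^2 + \<delta>^2) * x2 = 0" using f1 f2 by algebra
  have g3: "((\<nu>*t)^2 + \<delta>^2) * y1 = 0" using f3 f4 by algebra
  have g4: "((\<nu>*t)^2 + \<delta>^2) * y2 = 0" using f3 f4 by algebra
  have g: "((\<nu>*t)^2 + \<delta>^2) * z = 0" if "z = x1 \<or> z = y1 \<or> z = x2 \<or> z = y2" for z
    using that g1 g2 g3 g4 by auto
  have "(\<nu>*t)^2 + \<delta>^2 = 0" using g nz by (metis mult_eq_0_iff)
  then have "\<nu>*t = 0" "\<delta> = 0" by (simp_all add: sum_power2_eq_zero_iff)
  then show ?thesis unfolding t_def \<delta>_def by (auto simp: power2_eq_square)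
qed

lemma decomp:
  fixes q h :: "real^3"
  assumes "q \<in> S2" "h \<in> tang q"
  shows "(1 - (q$2)^2) *\<^sub>R h = (h \<bullet> vector [q$3, 0, - q$1]) *\<^sub>R vector [q$3, 0, - q$1]
       + (h$2) *\<^sub>R (vector [0,1,0] - (q$2) *\<^sub>R q)"
proof -
  have n: "(q$1)^2 + (q$2)^2 + (q$3)^2 = 1" using assms(1) by (simp add: S2_def norm3)
  have t: "h$1*q$1 + h$2*q$2 + h$3*q$3 = 0" using assms(2) by (simp add: tang_def inner3)
  show ?thesis unfolding vec3_eq using n t by (simp add: inner3) algebra
qed

definition ddet :: "real^3 \<Rightarrow> real^3 \<Rightarrow> real^3 \<Rightarrow> real^3 \<Rightarrow> real^3 \<Rightarrow> real^3 \<Rightarrow> real" where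
 "ddet q h u v du dv =
   h$1*(u$2* v$3 - u$3* v$2) + q$1*(du$2* v$3 + u$2*dv$3 - du$3* v$2 - u$3*dv$2)
 - (h$2*(u$1* v$3 - u$3* v$1) + q$2*(du$1* v$3 + u$1*dv$3 - du$3* v$1 - u$3*dv$1))
 + (h$3*(u$1* v$2 - u$2* v$1) + q$3*(du$1* v$2 + u$1*dv$2 - du$2* v$1 - u$2*dv$1))"

lemma det_deriv: "(detUV (poinc m X) (poinc m Y) has_derivative
   (\<lambda>h. ddet q h (poinc m X q) (poinc m Y q) (dpoinc m X q h) (dpoinc m Y q h))) (at q)"
proof -
  have cX: "((\<lambda>q. poinc m X q $ i) has_derivative (\<lambda>h. dpoinc m X q h $ i)) (at q)" for i X
    by (rule bounded_linear.has_derivative[OF bounded_linear_vec_nth poinc_deriv])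
  have e: "detUV (poinc m X) (poinc m Y) = (\<lambda>q. q$1 * (poinc m X q$2 * poinc m Y q$3 - poinc m X q$3 * poinc m Y q$2)
      - q$2 * (poinc m X q$1 * poinc m Y q$3 - poinc m X q$3 * poinc m Y q$1)
      + q$3 * (poinc m X q$1 * poinc m Y q$2 - poinc m X q$2 * poinc m Y q$1))"
    by (rule ext) (simp add: detUV_def Let_def)
  show ?thesis unfolding e ddet_def
    apply (rule derivative_eq_intros hd_nth cX refl)+
    apply (simp add: algebra_simps)
    done
qed

lemma ddet_identity:
  fixes p D du dv :: "real^3" and s :: real
  assumes "p$2 = 0"
  shows "ddet p (vector [p$3, 0, - p$1]) ((1-s) *\<^sub>R D) ((-s) *\<^sub>R D) du dv
    = - (((s *\<^sub>R du + (1-s) *\<^sub>R dv) \<bullet> vector [p$3, 0, - p$1]) * D$2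
          - (D \<bullet> vector [p$3, 0, - p$1]) * (s *\<^sub>R du + (1-s) *\<^sub>R dv)$2)"
  using assms unfolding ddet_def by (simp add: inner3 algebra_simps)




definition dreg :: "nat \<Rightarrow> (real \<Rightarrow> real) \<Rightarrow> (real \<Rightarrow> real) \<Rightarrow> real \<Rightarrow> pvf \<Rightarrow> pvf \<Rightarrow> real^3 \<Rightarrow> real^3 \<Rightarrow> real^3" where
 "dreg m \<phi> \<phi>' \<epsilon> X Y q h = (1 - \<phi> (q$2/\<epsilon>)) *\<^sub>R dpoinc m Y q h + \<phi> (q$2/\<epsilon>) *\<^sub>R dpoinc m X q h
    + (\<phi>' (q$2/\<epsilon>) * (h$2/\<epsilon>)) *\<^sub>R (poinc m X q - poinc m Y q)"

lemma reg_deriv: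
  assumes D: "\<And>x. (\<phi> has_real_derivative \<phi>' x) (at x)"
  shows "(reg_field m \<phi> \<epsilon> X Y has_derivative dreg m \<phi> \<phi>' \<epsilon> X Y q) (at q)"
proof -
  have c: "((\<lambda>q::real^3. \<phi> (q$2/\<epsilon>)) has_derivative (\<lambda>h. \<phi>' (q$2/\<epsilon>) * (h$2/\<epsilon>))) (at q)"
  proof -
    have a: "((\<lambda>q::real^3. q$2/\<epsilon>) has_derivative (\<lambda>h. h$2/\<epsilon>)) (at q)"
      by (rule bounded_linear_imp_has_derivative[OF bounded_linear_compose[OF bounded_linear_divide bounded_linear_vec_nth]])
    have b: "(\<phi> has_derivative (\<lambda>x. \<phi>' (q$2/\<epsilon>) * x)) (at (q$2/\<epsilon>))"
      using D[of "q$2/\<epsilon>"] by (simp add: has_field_derivative_def)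
    show ?thesis using has_derivative_compose[OF a b] by simp
  qed
  have e: "reg_field m \<phi> \<epsilon> X Y = (\<lambda>q. (1 - \<phi> (q$2/\<epsilon>)) *\<^sub>R poinc m Y q + \<phi> (q$2/\<epsilon>) *\<^sub>R poinc m X q)"
    by (rule ext) (simp add: reg_field_def)
  show ?thesis unfolding e dreg_def
    apply (rule derivative_eq_intros c poinc_deriv refl)+
    apply (simp add: algebra_simps)
    done
qed

lemma hyp_via:
  assumes "(F has_derivative F') (at p)"
  shows "hyp_sing F p \<longleftrightarrow> F p = 0 \<and> \<not> (\<exists>\<mu> w1 w2. w1 \<in> tang p \<and> w2 \<in> tang p \<and> (w1 \<noteq> 0 \<or> w2 \<noteq> 0) \<and>
          F' w1 = (- \<mu>) *\<^sub>R w2 \<and> F' w2 = \<mu> *\<^sub>R w1)"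
proof -
  have "F' = frechet_derivative F (at p)" using frechet_derivative_at[OF assms] .
  moreover have "F differentiable (at p)" using assms by (rule differentiableI)
  ultimately show ?thesis unfolding hyp_sing_def by auto
qed

lemma Uf_deriv: "(Uf (poinc m X) has_derivative (\<lambda>h. dpoinc m X q h $ 2)) (at q)"
proof -
  have "Uf (poinc m X) = (\<lambda>q. poinc m X q $ 2)" by (rule ext) (simp add: Uf_def)
  then show ?thesis using bounded_linear.has_derivative[OF bounded_linear_vec_nth poinc_deriv] by simp
qed

lemma U2f_zero: "poinc m X p = 0 \<Longrightarrow> U2f (poinc m X) p = 0"
proof -
  assume z: "poinc m X p = 0"
  have "U2f (poinc m X) p = dpoinc m X p (poinc m X p) $ 2"
    unfolding U2f_def using frechet_derivative_at[OF Uf_deriv[of m X p]] by metis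
  also have "\<dots> = 0" using z linear_0[OF bounded_linear.linear[OF has_derivative_bounded_linear[OF poinc_deriv[of m X p]]]] by simp
  finally show ?thesis .
qed

lemma nonzero_on_D:
  assumes G: "Gm1 m X Y" and p: "p \<in> S2" "p$2 = 0"
  shows "poinc m X p \<noteq> 0" "poinc m Y p \<noteq> 0"
proof -
  have pD: "p \<in> S2 \<inter> Dset" using p by (simp add: Dset_def)
  have el: "D_sing (poinc m X) (poinc m Y) p \<Longrightarrow> fold_pt (poinc m X) (poinc m Y) p \<or> hypF_pt (poinc m X) (poinc m Y) p"
    using G unfolding Gm1_def by blast
  show "poinc m X p \<noteq> 0"
  proof
    assume z: "poinc m X p = 0"
    then have u: "Uf (poinc m X) p = 0" by (simp add: Uf_def)
    then have "D_sing (poinc m X) (poinc m Y) p" using pD by (simp add: D_sing_def D_regular_def)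
    then have "fold_pt (poinc m X) (poinc m Y) p \<or> hypF_pt (poinc m X) (poinc m Y) p" by (rule el)
    then show False using u U2f_zero[OF z] by (auto simp: fold_pt_def hypF_pt_def)
  qed
  show "poinc m Y p \<noteq> 0"
  proof
    assume z: "poinc m Y p = 0"
    then have u: "Uf (poinc m Y) p = 0" by (simp add: Uf_def)
    then have "D_sing (poinc m X) (poinc m Y) p" using pD by (simp add: D_sing_def D_regular_def)
    then have "fold_pt (poinc m X) (poinc m Y) p \<or> hypF_pt (poinc m X) (poinc m Y) p" by (rule el)
    then show False using u U2f_zero[OF z] by (auto simp: fold_pt_def hypF_pt_def)
  qed
qed

lemma far_case:
  assumes G: "Gm1 m X Y"
    and D: "\<And>x. (\<phi> has_real_derivative \<phi>' x) (at x)"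
    and z: "\<And>t. 1 \<le> \<bar>t\<bar> \<Longrightarrow> \<phi>' t = 0"
    and lo: "\<And>t. t \<le> -1 \<Longrightarrow> \<phi> t = 0" and hi: "\<And>t. 1 \<le> t \<Longrightarrow> \<phi> t = 1"
    and e: "0 < \<epsilon>" and q: "q \<in> S2" and far: "\<epsilon> \<le> \<bar>q$2\<bar>" and W: "reg_field m \<phi> \<epsilon> X Y q = 0"
  shows "hyp_sing (reg_field m \<phi> \<epsilon> X Y) q"
proof -
  have hW: "hyp_sing (reg_field m \<phi> \<epsilon> X Y) q \<longleftrightarrow> reg_field m \<phi> \<epsilon> X Y q = 0 \<and> \<not> (\<exists>\<mu> w1 w2. w1 \<in> tang q \<and> w2 \<in> tang q \<and> (w1 \<noteq> 0 \<or> w2 \<noteq> 0) \<and>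
          dreg m \<phi> \<phi>' \<epsilon> X Y q w1 = (- \<mu>) *\<^sub>R w2 \<and> dreg m \<phi> \<phi>' \<epsilon> X Y q w2 = \<mu> *\<^sub>R w1)"
    by (rule hyp_via[OF reg_deriv[OF D]])
  have zz: "\<phi>' (q$2/\<epsilon>) = 0" using far e by (intro z) (simp add: abs_div)
  show ?thesis
  proof (cases "q$2 > 0")
    case True
    then have t: "1 \<le> q$2/\<epsilon>" using far e by simp
    have eq1: "reg_field m \<phi> \<epsilon> X Y q = poinc m X q" using hi[OF t] by (simp add: reg_field_def)
    have eq2: "dreg m \<phi> \<phi>' \<epsilon> X Y q = dpoinc m X q" using hi[OF t] zz by (simp add: dreg_def fun_eq_iff)
    have "q \<in> S2 \<inter> Nset" using q True by (simp add: Nset_def)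
    then have "hyp_sing (poinc m X) q" using G W eq1 unfolding Gm1_def Sm_cond_def by auto
    then show ?thesis unfolding hW eq2 hyp_via[OF poinc_deriv] eq1 .
  next
    case False
    then have "q$2 \<le> -\<epsilon>" using far e by (auto simp: abs_if split: if_splits)
    then have t: "q$2/\<epsilon> \<le> -1" using e by (simp add: pos_divide_le_eq)
    have eq1: "reg_field m \<phi> \<epsilon> X Y q = poinc m Y q" using lo[OF t] by (simp add: reg_field_def)
    have eq2: "dreg m \<phi> \<phi>' \<epsilon> X Y q = dpoinc m Y q" using lo[OF t] zz by (simp add: dreg_def fun_eq_iff)
    have "q$2 < 0" using \<open>q$2 \<le> -\<epsilon>\<close> e by simp
    then have "q \<in> S2 \<inter> Sset" using q by (simp add: Sset_def)
    then have "hyp_sing (poinc m Y) q" using G W eq1 unfolding Gm1_def Sm_cond_def by auto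
    then show ?thesis unfolding hW eq2 hyp_via[OF poinc_deriv] eq1 .
  qed
qed




lemma nonhyp_2x2:
  fixes L :: "real^3 \<Rightarrow> real^3" and q w1 w2 :: "real^3"
  assumes lin: "linear L" and q: "q \<in> S2" and q2: "\<bar>q$2\<bar> < 1"
    and w: "w1 \<in> tang q" "w2 \<in> tang q" "w1 \<noteq> 0 \<or> w2 \<noteq> 0"
    and e: "L w1 = (-\<mu>) *\<^sub>R w2" "L w2 = \<mu> *\<^sub>R w1"
  defines "f \<equiv> vector [q$3, 0, - q$1] :: real^3"
    and "g \<equiv> vector [0,1,0] - (q$2) *\<^sub>R q"
  shows "(L f \<bullet> f) * (L g $ 2) - (L g \<bullet> f) * (L f $ 2) = 0 \<or> L f \<bullet> f + L g $ 2 = 0"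
proof -
  define r where "r = 1 - (q$2)^2"
  have rpos: "r > 0" unfolding r_def using q2
    by (metis abs_square_less_1 diff_gt_0_iff_gt power2_eq_square)
  have dec: "r *\<^sub>R h = (h \<bullet> f) *\<^sub>R f + (h$2) *\<^sub>R g" if "h \<in> tang q" for h
    using decomp[OF q that] unfolding r_def f_def g_def .
  have Ld: "r *\<^sub>R L h = (h \<bullet> f) *\<^sub>R L f + (h$2) *\<^sub>R L g" if "h \<in> tang q" for h
  proof -
    have "r *\<^sub>R L h = L (r *\<^sub>R h)" using linear_cmul[OF lin] by simp
    also have "\<dots> = L ((h \<bullet> f) *\<^sub>R f + (h$2) *\<^sub>R g)" using dec[OF that] by simp
    also have "\<dots> = (h \<bullet> f) *\<^sub>R L f + (h$2) *\<^sub>R L g" using linear_add[OF lin] linear_cmul[OF lin] by simp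
    finally show ?thesis .
  qed
  define a1 where "a1 = w1 \<bullet> f"
  define b1 where "b1 = w1 $ 2"
  define a2 where "a2 = w2 \<bullet> f"
  define b2 where "b2 = w2 $ 2"
  have E1: "r *\<^sub>R ((-\<mu>) *\<^sub>R w2) = a1 *\<^sub>R L f + b1 *\<^sub>R L g" using Ld[OF w(1)] e unfolding a1_def b1_def by simp
  have E2: "r *\<^sub>R (\<mu> *\<^sub>R w1) = a2 *\<^sub>R L f + b2 *\<^sub>R L g" using Ld[OF w(2)] e unfolding a2_def b2_def by simp
  have i1: "(L f \<bullet> f)*a1 + (L g \<bullet> f)*b1 = -(\<mu>*r)*a2"
    using arg_cong[OF E1, of "\<lambda>v. v \<bullet> f"] unfolding a2_def by (simp add: inner_add_left algebra_simps)
  have i2: "(L f $ 2)*a1 + (L g $ 2)*b1 = -(\<mu>*r)*b2"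
    using arg_cong[OF E1, of "\<lambda>v. v $ 2"] unfolding b2_def by (simp add: algebra_simps)
  have i3: "(L f \<bullet> f)*a2 + (L g \<bullet> f)*b2 = (\<mu>*r)*a1"
    using arg_cong[OF E2, of "\<lambda>v. v \<bullet> f"] unfolding a1_def by (simp add: inner_add_left algebra_simps)
  have i4: "(L f $ 2)*a2 + (L g $ 2)*b2 = (\<mu>*r)*b1"
    using arg_cong[OF E2, of "\<lambda>v. v $ 2"] unfolding b1_def by (simp add: algebra_simps)
  have nz: "a1 \<noteq> 0 \<or> b1 \<noteq> 0 \<or> a2 \<noteq> 0 \<or> b2 \<noteq> 0"
  proof (rule ccontr)
    assume "\<not> ?thesis"
    then have "r *\<^sub>R w1 = 0" "r *\<^sub>R w2 = 0" using dec[OF w(1)] dec[OF w(2)] unfolding a1_def b1_def a2_def b2_def by auto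
    then show False using rpos w(3) by simp
  qed
  show ?thesis using two_by_two[OF i1 i2 i3 i4 nz] .
qed




lemma vector3_tendsto:
  assumes "(a \<longlongrightarrow> a0) F" "(b \<longlongrightarrow> b0) F" "(c \<longlongrightarrow> c0) F"
  shows "((\<lambda>n. vector [a n, b n, c n] :: real^3) \<longlongrightarrow> vector [a0, b0, c0]) F"
proof -
  define E1 where "E1 = (vector [1,0,0] :: real^3)"
  define E2 where "E2 = (vector [0,1,0] :: real^3)"
  define E3 where "E3 = (vector [0,0,1] :: real^3)"
  have e: "\<And>x y z. (vector [x,y,z] :: real^3) = x *\<^sub>R E1 + y *\<^sub>R E2 + z *\<^sub>R E3"
    by (simp add: vec3_eq E1_def E2_def E3_def)
  have "((\<lambda>n. a n *\<^sub>R E1 + b n *\<^sub>R E2 + c n *\<^sub>R E3) \<longlongrightarrow> a0 *\<^sub>R E1 + b0 *\<^sub>R E2 + c0 *\<^sub>R E3) F"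
    by (intro tendsto_intros assms)
  then show ?thesis by (simp only: e)
qed

lemma hypF_facts:
  assumes G: "Gm1 m X Y" and p: "p \<in> S2" "p$2 = 0"
    and s: "0 < s" "s < 1" and rel: "(1 - s) *\<^sub>R poinc m Y p + s *\<^sub>R poinc m X p = 0"
  shows "(poinc m X p - poinc m Y p) $ 2 \<noteq> 0"
    "((s *\<^sub>R dpoinc m X p (vector [p$3, 0, - p$1]) + (1-s) *\<^sub>R dpoinc m Y p (vector [p$3, 0, - p$1])) \<bullet> vector [p$3, 0, - p$1])
        * (poinc m X p - poinc m Y p) $ 2
     - ((poinc m X p - poinc m Y p) \<bullet> vector [p$3, 0, - p$1])
        * (s *\<^sub>R dpoinc m X p (vector [p$3, 0, - p$1]) + (1-s) *\<^sub>R dpoinc m Y p (vector [p$3, 0, - p$1])) $ 2 \<noteq> 0"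
proof -
  define u where "u = poinc m X p"
  define v where "v = poinc m Y p"
  define D where "D = u - v"
  have rel': "(1 - s) *\<^sub>R v + s *\<^sub>R u = 0" using rel unfolding u_def v_def .
  have uD: "u = (1-s) *\<^sub>R D" using rel' unfolding D_def by (simp add: vec3_eq algebra_simps)
  have vD: "v = (-s) *\<^sub>R D" using rel' unfolding D_def by (simp add: vec3_eq algebra_simps)
  have r2: "(1-s) * v$2 + s * u$2 = 0" using arg_cong[OF rel', of "\<lambda>w. w$2"] by simp
  have pD: "p \<in> S2 \<inter> Dset" using p by (simp add: Dset_def)
  have notpos: "\<not> (u$2 * v$2 > 0)"
  proof
    assume h: "u$2 * v$2 > 0"
    have "(1-s) * (u$2 * v$2) = - s * (u$2 * u$2)" using r2 by algebra
    moreover have "(1-s) * (u$2 * v$2) > 0" using h s by simp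
    moreover have "- s * (u$2 * u$2) \<le> 0" using s by (simp add: mult_nonneg_nonneg)
    ultimately show False by linarith
  qed
  have det0: "detUV (poinc m X) (poinc m Y) p = 0"
    unfolding detUV_def Let_def u_def[symmetric] v_def[symmetric] uD vD by (simp add: algebra_simps)
  have Ds: "D_sing (poinc m X) (poinc m Y) p"
    using pD notpos det0 unfolding D_sing_def D_regular_def Uf_def u_def v_def by auto
  then have "fold_pt (poinc m X) (poinc m Y) p \<or> hypF_pt (poinc m X) (poinc m Y) p"
    using G unfolding Gm1_def by blast
  moreover have "\<not> fold_pt (poinc m X) (poinc m Y) p"
  proof
    assume "fold_pt (poinc m X) (poinc m Y) p"
    then have "(v$2 \<noteq> 0 \<and> u$2 = 0) \<or> (u$2 \<noteq> 0 \<and> v$2 = 0)"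
      unfolding fold_pt_def Uf_def u_def v_def by auto
    then show False
    proof
      assume a: "v$2 \<noteq> 0 \<and> u$2 = 0"
      then have "(1-s) * v$2 = 0" using r2 by simp
      then show False using a s by simp
    next
      assume a: "u$2 \<noteq> 0 \<and> v$2 = 0"
      then have "s * u$2 = 0" using r2 by simp
      then show False using a s by simp
    qed
  qed
  ultimately have hF: "hypF_pt (poinc m X) (poinc m Y) p" by blast
  then have "u$2 * v$2 < 0" unfolding hypF_pt_def Uf_def u_def v_def by simp
  then show "(poinc m X p - poinc m Y p) $ 2 \<noteq> 0" unfolding u_def[symmetric] v_def[symmetric] by auto
  define f where "f = (vector [p$3, 0, - p$1] :: real^3)"
  have "frechet_derivative (detUV (poinc m X) (poinc m Y)) (at p) (dirD p) \<noteq> 0"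
    using hF unfolding hypF_pt_def by simp
  moreover have "frechet_derivative (detUV (poinc m X) (poinc m Y)) (at p) (dirD p)
     = ddet p f u v (dpoinc m X p f) (dpoinc m Y p f)"
  proof -
    have fe: "(\<lambda>h. ddet p h u v (dpoinc m X p h) (dpoinc m Y p h)) = frechet_derivative (detUV (poinc m X) (poinc m Y)) (at p)"
      using frechet_derivative_at[OF det_deriv[of m X Y p]] unfolding u_def v_def .
    have df: "dirD p = f" by (simp add: dirD_def f_def)
    show ?thesis using fun_cong[OF fe, of f] unfolding df by simp
  qed
  moreover have "ddet p f u v (dpoinc m X p f) (dpoinc m Y p f) = - (((s *\<^sub>R dpoinc m X p f + (1-s) *\<^sub>R dpoinc m Y p f) \<bullet> f) * D$2
          - (D \<bullet> f) * (s *\<^sub>R dpoinc m X p f + (1-s) *\<^sub>R dpoinc m Y p f)$2)"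
    unfolding f_def uD vD by (rule ddet_identity[OF p(2)])
  ultimately show "((s *\<^sub>R dpoinc m X p (vector [p$3, 0, - p$1]) + (1-s) *\<^sub>R dpoinc m Y p (vector [p$3, 0, - p$1])) \<bullet> vector [p$3, 0, - p$1])
        * (poinc m X p - poinc m Y p) $ 2
     - ((poinc m X p - poinc m Y p) \<bullet> vector [p$3, 0, - p$1])
        * (s *\<^sub>R dpoinc m X p (vector [p$3, 0, - p$1]) + (1-s) *\<^sub>R dpoinc m Y p (vector [p$3, 0, - p$1])) $ 2 \<noteq> 0"
    unfolding f_def D_def u_def v_def by (metis neg_equal_0_iff_equal)
qed




lemma main_near:
  assumes G: "Gm1 m X Y"
    and D: "\<And>x. (\<phi> has_real_derivative \<phi>' x) (at x)" and C: "\<And>x. isCont \<phi>' x"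
    and pos: "\<And>t. -1 < t \<Longrightarrow> t < 1 \<Longrightarrow> \<phi>' t > 0 \<and> 0 < \<phi> t \<and> \<phi> t < 1"
    and lo: "\<And>t. t \<le> -1 \<Longrightarrow> \<phi> t = 0" and hi: "\<And>t. 1 \<le> t \<Longrightarrow> \<phi> t = 1"
  shows "\<exists>\<epsilon>0>0. \<forall>\<epsilon>. 0 < \<epsilon> \<and> \<epsilon> \<le> \<epsilon>0 \<longrightarrow> (\<forall>q\<in>S2. \<bar>q$2\<bar> < \<epsilon> \<and> reg_field m \<phi> \<epsilon> X Y q = 0
            \<longrightarrow> hyp_sing (reg_field m \<phi> \<epsilon> X Y) q)"
proof (rule ccontr)
  assume H: "\<not> ?thesis"
  define P where "P n \<epsilon> q \<longleftrightarrow> 0 < \<epsilon> \<and> \<epsilon> \<le> 1/(real n + 2) \<and> q \<in> S2 \<and> \<bar>q$2\<bar> < \<epsilon> \<and>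
     reg_field m \<phi> \<epsilon> X Y q = 0 \<and> \<not> hyp_sing (reg_field m \<phi> \<epsilon> X Y) q" for n \<epsilon> q
  have "\<forall>n. \<exists>z. P n (fst z) (snd z)"
  proof
    fix n :: nat
    have "1/(real n+2) > 0" by simp
    then obtain \<epsilon> q where "0<\<epsilon>" "\<epsilon> \<le> 1/(real n+2)" "q\<in>S2" "\<bar>q$2\<bar><\<epsilon>" "reg_field m \<phi> \<epsilon> X Y q = 0"
       "\<not> hyp_sing (reg_field m \<phi> \<epsilon> X Y) q" using H by blast
    then show "\<exists>z. P n (fst z) (snd z)" by (intro exI[of _ "(\<epsilon>,q)"]) (simp add: P_def)
  qed
  then obtain Z where Z: "\<And>n. P n (fst (Z n)) (snd (Z n))" by (metis choice)
  define E where "E n = fst (Z n)" for n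
  define Q where "Q n = snd (Z n)" for n
  have Ep: "0 < E n" "E n \<le> 1/(real n+2)" and Qs: "Q n \<in> S2" and Qb: "\<bar>Q n$2\<bar> < E n"
    and QW: "reg_field m \<phi> (E n) X Y (Q n) = 0" and Qh: "\<not> hyp_sing (reg_field m \<phi> (E n) X Y) (Q n)" for n
    using Z[of n] unfolding P_def E_def Q_def by auto
  define T where "T n = Q n $2 / E n" for n
  have Tb: "-1 < T n \<and> T n < 1" for n
  proof -
    have "\<bar>T n\<bar> < 1" using Qb[of n] Ep(1)[of n] by (simp add: T_def abs_div)
    then show ?thesis by (simp add: abs_less_iff)
  qed
  have S2s: "S2 = sphere 0 1" by (auto simp: S2_def sphere_def dist_norm)
  have K: "compact (S2 \<times> {-1..1::real})" unfolding S2s by (intro compact_Times compact_sphere compact_Icc)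
  have inK: "\<forall>n. (Q n, T n) \<in> S2 \<times> {-1..1}" using Qs Tb by (auto simp: less_imp_le)
  obtain l r where l: "l \<in> S2 \<times> {-1..1}" "strict_mono r" "((\<lambda>n. (Q n, T n)) \<circ> r) \<longlonglongrightarrow> l"
    by (rule seq_compactE[OF compact_imp_seq_compact[OF K] inK])
  obtain p t0 where lpt: "l = (p, t0)" by (cases l)
  define q where "q n = Q (r n)" for n
  define e where "e n = E (r n)" for n
  define t where "t n = T (r n)" for n
  have qlim: "q \<longlonglongrightarrow> p" using tendsto_fst[OF l(3)] unfolding lpt by (simp add: o_def q_def[abs_def])
  have tlim: "t \<longlonglongrightarrow> t0" using tendsto_snd[OF l(3)] unfolding lpt by (simp add: o_def t_def[abs_def])
  have pS: "p \<in> S2" and t0b: "-1 \<le> t0" "t0 \<le> 1" using l(1) lpt by auto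
  have tq: "t n = q n $ 2 / e n" for n by (simp add: t_def T_def q_def e_def)
  have ep: "0 < e n" for n by (simp add: e_def Ep)
  have qb: "\<bar>q n $ 2\<bar> < e n" for n by (simp add: e_def q_def Qb)
  have eb: "e n \<le> inverse (real (Suc n))" for n
  proof -
    have "real n \<le> real (r n)" using seq_suble[OF l(2)] by simp
    then have "1/(real (r n)+2) \<le> 1/(real n + 1)" by (simp add: frac_le)
    then show ?thesis using Ep(2)[of "r n"] by (simp add: e_def inverse_eq_divide add.commute)
  qed
  have elim: "e \<longlonglongrightarrow> 0"
    by (rule tendsto_sandwich[of "\<lambda>n. 0" _ _ "\<lambda>n. inverse (real (Suc n))"])
       (use ep eb LIMSEQ_inverse_real_of_nat in \<open>auto simp: less_imp_le\<close>)
  have p2: "p$2 = 0"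
  proof -
    have "(\<lambda>n. q n $ 2) \<longlonglongrightarrow> p $ 2" by (intro tendsto_intros qlim)
    moreover have "(\<lambda>n. q n $ 2) \<longlonglongrightarrow> 0"
    proof (rule tendsto_sandwich[of "\<lambda>n. - e n" _ _ "e"])
      have "- e n \<le> q n $ 2 \<and> q n $ 2 \<le> e n" for n using qb[of n] by (simp add: abs_less_iff)
      then show "\<forall>\<^sub>F n in sequentially. - e n \<le> q n $ 2" "\<forall>\<^sub>F n in sequentially. q n $ 2 \<le> e n"
        by (simp_all add: always_eventually)
      show "(\<lambda>n. - e n) \<longlonglongrightarrow> 0" using tendsto_minus[OF elim] by simp
      show "e \<longlonglongrightarrow> 0" by (rule elim)
    qed
    ultimately show ?thesis using LIMSEQ_unique by blast
  qed
  define s where "s n = \<phi> (t n)" for n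
  have slim: "s \<longlonglongrightarrow> \<phi> t0" unfolding s_def by (rule isCont_tendsto_compose[OF DERIV_isCont[OF D] tlim])
  have rel: "(1 - \<phi> t0) *\<^sub>R poinc m Y p + \<phi> t0 *\<^sub>R poinc m X p = 0"
  proof -
    have "(\<lambda>n. (1 - s n) *\<^sub>R poinc m Y (q n) + s n *\<^sub>R poinc m X (q n)) \<longlonglongrightarrow> (1 - \<phi> t0) *\<^sub>R poinc m Y p + \<phi> t0 *\<^sub>R poinc m X p"
      by (intro tendsto_intros poinc_tendsto qlim slim)
    moreover have "(\<lambda>n. (1 - s n) *\<^sub>R poinc m Y (q n) + s n *\<^sub>R poinc m X (q n)) = (\<lambda>n. 0)"
    proof
      fix n
      have "reg_field m \<phi> (e n) X Y (q n) = 0" using QW[of "r n"] by (simp add: e_def q_def)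
      then show "(1 - s n) *\<^sub>R poinc m Y (q n) + s n *\<^sub>R poinc m X (q n) = 0"
        by (simp add: reg_field_def s_def tq)
    qed
    ultimately show ?thesis using LIMSEQ_unique tendsto_const by metis
  qed
  have t0in: "-1 < t0" "t0 < 1"
  proof -
    show "-1 < t0"
    proof (rule ccontr)
      assume "\<not> -1 < t0" then have "t0 = -1" using t0b by simp
      then have "poinc m Y p = 0" using rel lo[of t0] by simp
      then show False using nonzero_on_D(2)[OF G pS p2] by simp
    qed
    show "t0 < 1"
    proof (rule ccontr)
      assume "\<not> t0 < 1" then have "t0 = 1" using t0b by simp
      then have "poinc m X p = 0" using rel hi[of t0] by simp
      then show False using nonzero_on_D(1)[OF G pS p2] by simp
    qed
  qed
  have k0: "\<phi>' t0 > 0" and s0: "0 < \<phi> t0" "\<phi> t0 < 1" using pos[OF t0in] by auto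
  note HF = hypF_facts[OF G pS p2 s0 rel]
  define f0 where "f0 = (vector [p$3, 0, - p$1] :: real^3)"
  define g0 where "g0 = (vector [0,1,0] - (p$2) *\<^sub>R p :: real^3)"
  define fv where "fv n = (vector [q n$3, 0, - q n$1] :: real^3)" for n
  define gv where "gv n = (vector [0,1,0] - (q n$2) *\<^sub>R q n :: real^3)" for n
  define L where "L n = dreg m \<phi> \<phi>' (e n) X Y (q n)" for n
  have detn: "(L n (fv n) \<bullet> fv n) * (L n (gv n) $ 2) - (L n (gv n) \<bullet> fv n) * (L n (fv n) $ 2) = 0
      \<or> L n (fv n) \<bullet> fv n + L n (gv n) $ 2 = 0" for n
  proof -
    have der: "(reg_field m \<phi> (e n) X Y has_derivative L n) (at (q n))"
      unfolding L_def by (rule reg_deriv[OF D])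
    have nh: "\<not> hyp_sing (reg_field m \<phi> (e n) X Y) (q n)" using Qh[of "r n"] by (simp add: e_def q_def)
    have z: "reg_field m \<phi> (e n) X Y (q n) = 0" using QW[of "r n"] by (simp add: e_def q_def)
    obtain \<mu> w1 w2 where w: "w1 \<in> tang (q n)" "w2 \<in> tang (q n)" "w1 \<noteq> 0 \<or> w2 \<noteq> 0"
      "L n w1 = (- \<mu>) *\<^sub>R w2" "L n w2 = \<mu> *\<^sub>R w1"
      using nh z unfolding hyp_via[OF der] by blast
    have lin: "linear (L n)" using has_derivative_bounded_linear[OF der] bounded_linear.linear by blast
    have qs: "q n \<in> S2" by (simp add: q_def Qs)
    have iv: "inverse (real (Suc n)) \<le> 1" by (simp add: inverse_le_1_iff)
    have "e n \<le> 1" using eb[of n] iv by linarith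
    then have q2: "\<bar>q n $ 2\<bar> < 1" using qb[of n] by linarith
    show ?thesis using nonhyp_2x2[OF lin qs q2 w] unfolding fv_def gv_def .
  qed
  define A where "A n h = (1 - s n) *\<^sub>R dpoinc m Y (q n) h + s n *\<^sub>R dpoinc m X (q n) h" for n h
  define Dn where "Dn n = poinc m X (q n) - poinc m Y (q n)" for n
  define k where "k n = \<phi>' (t n) / e n" for n
  have Lform: "L n h = A n h + (k n * h$2) *\<^sub>R Dn n" for n h
    unfolding L_def dreg_def A_def k_def Dn_def s_def tq by (simp add: algebra_simps)
  have kpos: "k n > 0" for n using pos[of "t n"] Tb[of "r n"] ep[of n] by (simp add: k_def t_def)
  have fv2: "fv n $ 2 = 0" for n by (simp add: fv_def)
  have Lf: "L n (fv n) = A n (fv n)" for n unfolding Lform by (simp add: fv2)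
  have trform: "(L n (fv n) \<bullet> fv n + L n (gv n) $ 2) * (1 / k n) =
      (A n (fv n) \<bullet> fv n) * (1 / k n) + (A n (gv n) $ 2) * (1 / k n) + gv n $ 2 * Dn n $ 2" for n
    using kpos[of n] unfolding Lf unfolding Lform by (simp add: field_simps)
  have detform: "((L n (fv n) \<bullet> fv n) * (L n (gv n) $ 2) - (L n (gv n) \<bullet> fv n) * (L n (fv n) $ 2)) * (1 / k n) =
      (A n (fv n) \<bullet> fv n) * ((A n (gv n)) $ 2 * (1 / k n) + gv n $ 2 * Dn n $ 2)
      - ((A n (gv n) \<bullet> fv n) * (1 / k n) + gv n $ 2 * (Dn n \<bullet> fv n)) * (A n (fv n)) $ 2" for n
    using kpos[of n] unfolding Lf unfolding Lform by (simp add: field_simps inner_add_left)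
  have kilim: "(\<lambda>n. 1 / k n) \<longlonglongrightarrow> 0"
  proof -
    have "(\<lambda>n. e n / \<phi>' (t n)) \<longlonglongrightarrow> 0 / \<phi>' t0"
      by (intro tendsto_intros elim isCont_tendsto_compose[OF C tlim]) (use k0 in simp)
    moreover have "(\<lambda>n. 1 / k n) = (\<lambda>n. e n / \<phi>' (t n))" by (simp add: k_def fun_eq_iff)
    ultimately show ?thesis by simp
  qed
  have fvlim: "fv \<longlonglongrightarrow> f0" unfolding fv_def f0_def by (intro vector3_tendsto tendsto_intros qlim)
  have gvlim: "gv \<longlonglongrightarrow> g0" unfolding gv_def g0_def by (intro tendsto_intros qlim)
  have Aflim: "(\<lambda>n. A n (fv n)) \<longlonglongrightarrow> (1 - \<phi> t0) *\<^sub>R dpoinc m Y p f0 + \<phi> t0 *\<^sub>R dpoinc m X p f0"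
    unfolding A_def by (intro tendsto_intros dpoinc_tendsto slim qlim fvlim)
  have Aglim: "(\<lambda>n. A n (gv n)) \<longlonglongrightarrow> (1 - \<phi> t0) *\<^sub>R dpoinc m Y p g0 + \<phi> t0 *\<^sub>R dpoinc m X p g0"
    unfolding A_def by (intro tendsto_intros dpoinc_tendsto slim qlim gvlim)
  have Dlim: "Dn \<longlonglongrightarrow> poinc m X p - poinc m Y p"
    unfolding Dn_def by (intro tendsto_intros poinc_tendsto qlim)
  have g02: "g0 $ 2 = 1" using p2 by (simp add: g0_def)
  have trlim: "(\<lambda>n. (L n (fv n) \<bullet> fv n + L n (gv n) $ 2) * (1 / k n)) \<longlonglongrightarrow> (poinc m X p - poinc m Y p) $ 2"
  proof -
    have "(\<lambda>n. (A n (fv n) \<bullet> fv n) * (1 / k n) + (A n (gv n) $ 2) * (1 / k n) + gv n $ 2 * Dn n $ 2) \<longlonglongrightarrow>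
       (((1 - \<phi> t0) *\<^sub>R dpoinc m Y p f0 + \<phi> t0 *\<^sub>R dpoinc m X p f0) \<bullet> f0) * 0 + (((1 - \<phi> t0) *\<^sub>R dpoinc m Y p g0 + \<phi> t0 *\<^sub>R dpoinc m X p g0) $ 2) * 0 + g0 $ 2 * (poinc m X p - poinc m Y p) $ 2"
      by (intro tendsto_intros Aflim Aglim fvlim gvlim Dlim kilim)
    then show ?thesis unfolding trform g02 by simp
  qed
  have detlim: "(\<lambda>n. ((L n (fv n) \<bullet> fv n) * (L n (gv n) $ 2) - (L n (gv n) \<bullet> fv n) * (L n (fv n) $ 2)) * (1 / k n))
     \<longlonglongrightarrow> (((1 - \<phi> t0) *\<^sub>R dpoinc m Y p f0 + \<phi> t0 *\<^sub>R dpoinc m X p f0) \<bullet> f0) * (g0 $ 2 * (poinc m X p - poinc m Y p) $ 2)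
        - (g0 $ 2 * ((poinc m X p - poinc m Y p) \<bullet> f0)) * ((1 - \<phi> t0) *\<^sub>R dpoinc m Y p f0 + \<phi> t0 *\<^sub>R dpoinc m X p f0) $ 2"
  proof -
    have "(\<lambda>n. (A n (fv n) \<bullet> fv n) * ((A n (gv n)) $ 2 * (1 / k n) + gv n $ 2 * Dn n $ 2)
      - ((A n (gv n) \<bullet> fv n) * (1 / k n) + gv n $ 2 * (Dn n \<bullet> fv n)) * (A n (fv n)) $ 2) \<longlonglongrightarrow>
       (((1 - \<phi> t0) *\<^sub>R dpoinc m Y p f0 + \<phi> t0 *\<^sub>R dpoinc m X p f0) \<bullet> f0) * ((((1 - \<phi> t0) *\<^sub>R dpoinc m Y p g0 + \<phi> t0 *\<^sub>R dpoinc m X p g0) $ 2) * 0 + g0 $ 2 * (poinc m X p - poinc m Y p) $ 2)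
        - ((((1 - \<phi> t0) *\<^sub>R dpoinc m Y p g0 + \<phi> t0 *\<^sub>R dpoinc m X p g0) \<bullet> f0) * 0 + g0 $ 2 * ((poinc m X p - poinc m Y p) \<bullet> f0)) * ((1 - \<phi> t0) *\<^sub>R dpoinc m Y p f0 + \<phi> t0 *\<^sub>R dpoinc m X p f0) $ 2"
      by (intro tendsto_intros Aflim Aglim fvlim gvlim Dlim kilim)
    then show ?thesis unfolding detform by simp
  qed
  have c1: "(poinc m X p - poinc m Y p) $ 2 \<noteq> 0" using HF(1) .
  have c2: "(((1 - \<phi> t0) *\<^sub>R dpoinc m Y p f0 + \<phi> t0 *\<^sub>R dpoinc m X p f0) \<bullet> f0) * (g0 $ 2 * (poinc m X p - poinc m Y p) $ 2)
        - (g0 $ 2 * ((poinc m X p - poinc m Y p) \<bullet> f0)) * ((1 - \<phi> t0) *\<^sub>R dpoinc m Y p f0 + \<phi> t0 *\<^sub>R dpoinc m X p f0) $ 2 \<noteq> 0"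
    using HF(2) unfolding g02 f0_def by (simp add: add.commute)
  have "eventually (\<lambda>n. (L n (fv n) \<bullet> fv n + L n (gv n) $ 2) * (1 / k n) \<noteq> 0) sequentially"
    by (rule tendsto_imp_eventually_ne[OF trlim c1])
  moreover have "eventually (\<lambda>n. ((L n (fv n) \<bullet> fv n) * (L n (gv n) $ 2) - (L n (gv n) \<bullet> fv n) * (L n (fv n) $ 2)) * (1 / k n) \<noteq> 0) sequentially"
    by (rule tendsto_imp_eventually_ne[OF detlim c2])
  ultimately have "eventually (\<lambda>n. False) sequentially"
  proof eventually_elim
    case (elim n)
    then show ?case using detn[of n] by auto
  qed
  then show False by simp
qed



theorem mainTheorem7:
  fixes m :: nat and X Y :: pvf and \<phi> :: "real \<Rightarrow> real"
  assumes "m \<ge> 1"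
    and "Gm1 m X Y"
    and "transition_fun \<phi>"
  shows "\<exists>\<epsilon>0 > 0. \<forall>\<epsilon>. 0 < \<epsilon> \<and> \<epsilon> \<le> \<epsilon>0 \<longrightarrow>
           (\<forall>q \<in> S2. reg_field m \<phi> \<epsilon> X Y q = 0 \<longrightarrow> hyp_sing (reg_field m \<phi> \<epsilon> X Y) q)"
proof -
  obtain \<phi>' where D: "\<And>x. (\<phi> has_real_derivative \<phi>' x) (at x)" and C: "\<And>x. isCont \<phi>' x"
    and z: "\<And>t. 1 \<le> \<bar>t\<bar> \<Longrightarrow> \<phi>' t = 0"
    and pos: "\<And>t. -1 < t \<Longrightarrow> t < 1 \<Longrightarrow> \<phi>' t > 0 \<and> 0 < \<phi> t \<and> \<phi> t < 1"
    and lo: "\<And>t. t \<le> -1 \<Longrightarrow> \<phi> t = 0" and hi: "\<And>t. 1 \<le> t \<Longrightarrow> \<phi> t = 1"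
    by (rule phi_facts[OF assms(3)]) blast
  obtain \<epsilon>0 where e0: "\<epsilon>0 > 0" and near: "\<forall>\<epsilon>. 0 < \<epsilon> \<and> \<epsilon> \<le> \<epsilon>0 \<longrightarrow> (\<forall>q\<in>S2. \<bar>q$2\<bar> < \<epsilon> \<and> reg_field m \<phi> \<epsilon> X Y q = 0
            \<longrightarrow> hyp_sing (reg_field m \<phi> \<epsilon> X Y) q)"
    using main_near[OF assms(2) D C pos lo hi] by blast
  show ?thesis
  proof (intro exI[of _ \<epsilon>0] conjI allI impI ballI)
    show "\<epsilon>0 > 0" by (rule e0)
    fix \<epsilon> q assume e: "0 < \<epsilon> \<and> \<epsilon> \<le> \<epsilon>0" and q: "q \<in> S2" and W: "reg_field m \<phi> \<epsilon> X Y q = 0"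
    show "hyp_sing (reg_field m \<phi> \<epsilon> X Y) q"
    proof (cases "\<bar>q$2\<bar> < \<epsilon>")
      case True then show ?thesis using near e q W by blast
    next
      case False
      then have "\<epsilon> \<le> \<bar>q$2\<bar>" by simp
      then show ?thesis using far_case[OF assms(2) D z lo hi _ q _ W] e by blast
    qed
  qed
qed

end
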